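(* Let $m\ge2$ and let $T\in L(\ell_1^n,\ell_\infty^m)$, $T\neq\theta$, be approximately smooth (i.e. $\varepsilon$-smooth for some $\varepsilon\in[0,2)$). Then $T$ is smooth.
   Context: $\ell_1^n$ is $\mathbb{R}^n$ with the $\ell_1$ norm, $\ell_\infty^m$ is $\mathbb{R}^m$ with the max norm; $L(\ell_1^n,\ell_\infty^m)$ is the space of linear operators with the operator norm, and smoothness refers to $T$ as an element of this space. For a normed space $Z$ and $z\neq\theta$, $J(z)=\{\phi\in S_{Z^*}:\phi(z)=\|z\|\}$; $z$ is smooth if $J(z)$ is a singleton and $\varepsilon$-smooth if $\sup_{\phi,\psi\in J(z)}\|\phi-\psi\|\le\varepsilon$. *)

theory Defs
  imports "HOL-Analysis.Analysis"
begin

text \<open>Operators in L(l1^n, linf^m) are represented by their m x n matrices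
  (type real^'n^'m, acting by A *v x); this is a linear isomorphism.\<close>

definition l1norm :: "real^'n \<Rightarrow> real" where
  "l1norm x = (\<Sum>i\<in>UNIV. \<bar>x $ i\<bar>)"

definition linfnorm :: "real^'m \<Rightarrow> real" where
  "linfnorm y = Max (range (\<lambda>i. \<bar>y $ i\<bar>))"

definition opnorm_1inf :: "real^'n^'m \<Rightarrow> real" where
  "opnorm_1inf T = Sup {linfnorm (T *v x) | x. l1norm x \<le> 1}"

definition dualnorm :: "(real^'n^'m \<Rightarrow> real) \<Rightarrow> real" where
  "dualnorm \<phi> = Sup {\<bar>\<phi> S\<bar> | S. opnorm_1inf S \<le> 1}"

definition Jset :: "real^'n^'m \<Rightarrow> (real^'n^'m \<Rightarrow> real) set" where
  "Jset z = {\<phi>. linear \<phi> \<and> dualnorm \<phi> = 1 \<and> \<phi> z = opnorm_1inf z}"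

definition smooth_op :: "real^'n^'m \<Rightarrow> bool" where
  "smooth_op z \<longleftrightarrow> (\<exists>\<phi>. Jset z = {\<phi>})"

definition eps_smooth_op :: "real \<Rightarrow> real^'n^'m \<Rightarrow> bool" where
  "eps_smooth_op \<epsilon> z \<longleftrightarrow> (\<forall>\<phi>\<in>Jset z. \<forall>\<psi>\<in>Jset z. dualnorm (\<lambda>S. \<phi> S - \<psi> S) \<le> \<epsilon>)"

definition approx_smooth_op :: "real^'n^'m \<Rightarrow> bool" where
  "approx_smooth_op z \<longleftrightarrow> (\<exists>\<epsilon>. 0 \<le> \<epsilon> \<and> \<epsilon> < 2 \<and> eps_smooth_op \<epsilon> z)"

end

theory Submission
  imports Defs
begin

lemma linf_ge: "\<bar>y $ i\<bar> \<le> linfnorm (y::real^'m)"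
  unfolding linfnorm_def by (rule Max_ge) auto

lemma linf_le: "(\<And>i. \<bar>y $ i\<bar> \<le> c) \<Longrightarrow> linfnorm (y::real^'m) \<le> c"
  unfolding linfnorm_def by (subst Max_le_iff) auto

definition entmax :: "real^'n^'m \<Rightarrow> real" where
  "entmax S = Max (range (\<lambda>p. \<bar>S $ fst p $ snd p\<bar>))"

lemma ent_le_entmax: "\<bar>S $ i $ j\<bar> \<le> entmax S"
  unfolding entmax_def by (rule Max_ge) (auto intro: range_eqI[of _ _ "(i,j)"])

lemma entmax_attained: "\<exists>i j. entmax S = \<bar>S $ i $ j\<bar>"
proof -
  have "entmax S \<in> range (\<lambda>p. \<bar>S $ fst p $ snd p\<bar>)"
    unfolding entmax_def by (rule Max_in) auto
  then show ?thesis by auto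
qed

lemma entmax_le: "(\<And>i j. \<bar>S $ i $ j\<bar> \<le> c) \<Longrightarrow> entmax S \<le> c"
  unfolding entmax_def by (subst Max_le_iff) auto

lemma opnorm_eq: "opnorm_1inf S = entmax S"
proof -
  let ?M = "entmax S"
  obtain i0 j0 where p0: "?M = \<bar>S $ i0 $ j0\<bar>" using entmax_attained by blast
  have M0: "0 \<le> ?M" using p0 by simp
  have ub: "linfnorm (S *v x) \<le> ?M" if "l1norm x \<le> 1" for x
  proof (rule linf_le)
    fix i
    have "\<bar>(S *v x) $ i\<bar> = \<bar>\<Sum>j\<in>UNIV. S $ i $ j * x $ j\<bar>"
      by (simp add: matrix_vector_mult_def)
    also have "\<dots> \<le> (\<Sum>j\<in>UNIV. \<bar>S $ i $ j * x $ j\<bar>)" by (rule sum_abs)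
    also have "\<dots> \<le> (\<Sum>j\<in>UNIV. ?M * \<bar>x $ j\<bar>)"
      by (rule sum_mono) (simp add: abs_mult ent_le_entmax mult_right_mono)
    also have "\<dots> = ?M * l1norm x" by (simp add: l1norm_def sum_distrib_left)
    also have "\<dots> \<le> ?M" by (rule mult_left_le[OF that M0])
    finally show "\<bar>(S *v x) $ i\<bar> \<le> ?M" .
  qed
  define x0 where "x0 = axis j0 (1::real)"
  have l1: "l1norm x0 = 1"
    unfolding l1norm_def x0_def by (simp add: axis_def)
  have "linfnorm (S *v x0) \<ge> ?M"
  proof -
    have "(S *v x0) $ i0 = (\<Sum>j\<in>UNIV. if j = j0 then S $ i0 $ j else 0)"
      unfolding x0_def
      by (simp add: axis_def matrix_vector_mult_def if_distrib[of "\<lambda>x. _ * x"] cong: if_cong)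
    also have "\<dots> = S $ i0 $ j0" by simp
    finally have "(S *v x0) $ i0 = S $ i0 $ j0" .
    then show ?thesis using linf_ge[of "S *v x0" i0] p0 by simp
  qed
  then have mem: "?M \<in> {linfnorm (S *v x) | x. l1norm x \<le> 1}"
    using ub[of x0] l1 by (intro CollectI exI[of _ x0]) auto
  show ?thesis unfolding opnorm_1inf_def
    by (rule cSup_eq_maximum[OF mem]) (use ub in auto)
qed


lemma dual_upper:
  assumes "\<And>S. opnorm_1inf S \<le> 1 \<Longrightarrow> \<bar>\<phi> S\<bar> \<le> B" and "opnorm_1inf S \<le> 1"
  shows "\<bar>\<phi> S\<bar> \<le> dualnorm \<phi>"
  unfolding dualnorm_def
  by (rule cSup_upper) (use assms in \<open>auto simp: bdd_above_def\<close>)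

lemma dual_le:
  assumes "\<And>S. opnorm_1inf S \<le> 1 \<Longrightarrow> \<bar>\<phi> S\<bar> \<le> c"
  shows "dualnorm \<phi> \<le> c"
proof -
  have "opnorm_1inf (0::real^'n^'m) \<le> 1"
    by (simp add: opnorm_eq entmax_le)
  then show ?thesis unfolding dualnorm_def
    by (intro cSup_least) (use assms in auto)
qed

definition Emat :: "'m \<Rightarrow> 'n \<Rightarrow> real^'n^'m" where
  "Emat i j = (\<chi> a b. if a = i \<and> b = j then 1 else 0)"

lemma Emat_comp: "Emat i j $ a $ b = (if (a,b) = (i,j) then 1 else 0)"
  by (simp add: Emat_def)

lemma vec2_eqI: "(\<And>a b. (S::real^'n^'m) $ a $ b = T $ a $ b) \<Longrightarrow> S = T"
  by (simp add: vec_eq_iff)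

lemma expand_mat:
  "S = (\<Sum>p\<in>UNIV. S $ fst p $ snd p *\<^sub>R Emat (fst p) (snd p))"
proof -
  have "S $ a $ b = (\<Sum>p\<in>UNIV. S $ fst p $ snd p *\<^sub>R Emat (fst p) (snd p)) $ a $ b" for a b
  proof -
    have "(\<Sum>p\<in>UNIV. S $ fst p $ snd p *\<^sub>R Emat (fst p) (snd p)) $ a $ b
        = (\<Sum>p\<in>UNIV. S $ fst p $ snd p * (Emat (fst p) (snd p) $ a $ b))"
      by (simp only: sum_component vector_scaleR_component real_scaleR_def)
    also have "\<dots> = (\<Sum>p\<in>UNIV. if p = (a,b) then S $ fst p $ snd p else 0)"
      by (rule sum.cong) (auto simp: Emat_comp)
    also have "\<dots> = S $ a $ b" by simp
    finally show ?thesis by (rule sym)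
  qed
  then show ?thesis by (rule vec2_eqI)
qed

lemma expand_lin:
  assumes "linear \<psi>"
  shows "\<psi> S = (\<Sum>p\<in>UNIV. S $ fst p $ snd p * \<psi> (Emat (fst p) (snd p)))"
proof -
  have "\<psi> S = \<psi> (\<Sum>p\<in>UNIV. S $ fst p $ snd p *\<^sub>R Emat (fst p) (snd p))"
    by (subst expand_mat) simp
  also have "\<dots> = (\<Sum>p\<in>UNIV. S $ fst p $ snd p * \<psi> (Emat (fst p) (snd p)))"
    using assms by (simp add: linear_sum linear_scale)
  finally show ?thesis .
qed

definition phiT :: "real^'n^'m \<Rightarrow> 'm \<Rightarrow> 'n \<Rightarrow> (real^'n^'m \<Rightarrow> real)" where
  "phiT T i j = (\<lambda>S. S $ i $ j * sgn (T $ i $ j))"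

lemma phiT_in:
  assumes "opnorm_1inf T = \<bar>T $ i $ j\<bar>" "T $ i $ j \<noteq> 0"
  shows "phiT T i j \<in> Jset T"
proof -
  have lin: "linear (phiT T i j)"
    unfolding phiT_def by (rule linearI) (auto simp: algebra_simps)
  have s1: "\<bar>sgn (T $ i $ j)\<bar> = 1" using assms(2) by (simp add: abs_sgn)
  have bd: "\<bar>phiT T i j S\<bar> \<le> 1" if "opnorm_1inf S \<le> 1" for S
    using that ent_le_entmax[of S i j] s1 by (simp add: phiT_def opnorm_eq abs_mult)
  have E1: "opnorm_1inf (Emat i j) \<le> 1"
    unfolding opnorm_eq by (rule entmax_le) (simp add: Emat_def)
  have "\<bar>phiT T i j (Emat i j)\<bar> = 1" using s1 by (simp add: phiT_def Emat_def)
  then have "1 \<le> dualnorm (phiT T i j)"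
    using dual_upper[of "phiT T i j" 1 "Emat i j", OF bd E1] by simp
  moreover have "dualnorm (phiT T i j) \<le> 1" by (rule dual_le[OF bd])
  moreover have "phiT T i j T = opnorm_1inf T"
    using assms(1) by (simp add: phiT_def sgn_if)
  ultimately show ?thesis using lin by (simp add: Jset_def)
qed


lemma ite_le1: "\<bar>(if P then sgn (x::real) else if Q then - sgn y else 0)\<bar> \<le> 1"
  by (auto simp: sgn_if)

lemma sgnsq: "(x::real) \<noteq> 0 \<Longrightarrow> sgn x * sgn x = 1"
  by (simp add: sgn_if)

lemma sgn_abs_le1: "\<bar>sgn (x::real)\<bar> \<le> 1"
  by (simp add: sgn_if)

theorem theorem3p5:
  fixes T :: "real^'n^'m"
  assumes "CARD('m) \<ge> 2"
    and "T \<noteq> 0"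
    and "approx_smooth_op T"
  shows "smooth_op T"
proof -
  let ?M = "opnorm_1inf T"
  obtain i0 j0 where p0: "?M = \<bar>T $ i0 $ j0\<bar>"
    using entmax_attained opnorm_eq by metis
  obtain a b where "T $ a $ b \<noteq> 0" using assms(2) by (auto simp: vec_eq_iff)
  then have Mpos: "?M > 0" using ent_le_entmax[of T a b] by (simp add: opnorm_eq)
  then have T0: "T $ i0 $ j0 \<noteq> 0" using p0 by auto
  obtain \<epsilon> where eps: "\<epsilon> < 2" "eps_smooth_op \<epsilon> T"
    using assms(3) by (auto simp: approx_smooth_op_def)
  have J0: "phiT T i0 j0 \<in> Jset T" by (rule phiT_in[OF p0 T0])
  have uniq: "\<bar>T $ i $ j\<bar> < ?M" if "(i,j) \<noteq> (i0,j0)" for i j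
  proof (rule ccontr)
    assume "\<not> \<bar>T $ i $ j\<bar> < ?M"
    then have p1: "?M = \<bar>T $ i $ j\<bar>" using ent_le_entmax[of T i j] by (simp add: opnorm_eq)
    then have T1: "T $ i $ j \<noteq> 0" using Mpos by auto
    have J1: "phiT T i j \<in> Jset T" by (rule phiT_in[OF p1 T1])
    let ?d = "\<lambda>S. phiT T i0 j0 S - phiT T i j S"
    have dle: "dualnorm ?d \<le> \<epsilon>" using eps(2) J0 J1 unfolding eps_smooth_op_def by blast
    define Sx :: "real^'n^'m" where "Sx = (\<chi> a b. if (a,b) = (i0,j0) then sgn (T $ i0 $ j0)
        else if (a,b) = (i,j) then - sgn (T $ i $ j) else 0)"
    have bd: "\<bar>?d S\<bar> \<le> 2" if "opnorm_1inf S \<le> 1" for S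
    proof -
      have "\<bar>?d S\<bar> \<le> \<bar>S $ i0 $ j0\<bar> * \<bar>sgn (T $ i0 $ j0)\<bar> + \<bar>S $ i $ j\<bar> * \<bar>sgn (T $ i $ j)\<bar>"
        unfolding phiT_def using abs_triangle_ineq4[of "S $ i0 $ j0 * sgn (T $ i0 $ j0)" "S $ i $ j * sgn (T $ i $ j)"] by (simp only: abs_mult)
      moreover have a1: "\<bar>S $ i0 $ j0\<bar> \<le> 1" "\<bar>S $ i $ j\<bar> \<le> 1"
        using ent_le_entmax[of S i0 j0] ent_le_entmax[of S i j] that
        unfolding opnorm_eq by linarith+
      moreover have "\<bar>S $ i0 $ j0\<bar> * \<bar>sgn (T $ i0 $ j0)\<bar> \<le> 1"
        by (rule mult_le_one[OF a1(1) abs_ge_zero sgn_abs_le1])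
      moreover have "\<bar>S $ i $ j\<bar> * \<bar>sgn (T $ i $ j)\<bar> \<le> 1"
        by (rule mult_le_one[OF a1(2) abs_ge_zero sgn_abs_le1])
      ultimately show ?thesis by linarith
    qed
    have Sx1: "opnorm_1inf Sx \<le> 1"
      unfolding opnorm_eq Sx_def by (rule entmax_le) (simp only: vec_lambda_beta ite_le1)
    have e0: "Sx $ i0 $ j0 = sgn (T $ i0 $ j0)" by (simp add: Sx_def)
    have e1: "Sx $ i $ j = - sgn (T $ i $ j)" by (simp only: Sx_def vec_lambda_beta if_not_P[OF that] simp_thms if_True)
    have "?d Sx = sgn (T $ i0 $ j0) * sgn (T $ i0 $ j0) + sgn (T $ i $ j) * sgn (T $ i $ j)"
      unfolding phiT_def e0 e1 by simp
    also have "\<dots> = 2" using T0 T1 by (simp add: sgnsq)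
    finally have "?d Sx = 2" .
    then have "2 \<le> dualnorm ?d" using dual_upper[of ?d 2 Sx, OF bd Sx1] by simp
    then show False using dle eps(1) by simp
  qed
  have sub: "\<psi> = phiT T i0 j0" if psi: "\<psi> \<in> Jset T" for \<psi>
  proof -
    have lin: "linear \<psi>" and dn: "dualnorm \<psi> = 1" and val: "\<psi> T = ?M"
      using psi by (auto simp: Jset_def)
    define c where "c p = \<psi> (Emat (fst p) (snd p))" for p
    have ex: "\<psi> S = (\<Sum>p\<in>UNIV. S $ fst p $ snd p * c p)" for S
      unfolding c_def by (rule expand_lin[OF lin])
    have bd: "\<bar>\<psi> S\<bar> \<le> (\<Sum>p\<in>UNIV. \<bar>c p\<bar>)" if "opnorm_1inf S \<le> 1" for S
    proof -
      have "\<bar>\<psi> S\<bar> \<le> (\<Sum>p\<in>UNIV. \<bar>S $ fst p $ snd p * c p\<bar>)" unfolding ex by (rule sum_abs)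
      also have "\<dots> \<le> (\<Sum>p\<in>UNIV. \<bar>c p\<bar>)"
      proof (rule sum_mono)
        fix p :: "'m \<times> 'n"
        have "\<bar>S $ fst p $ snd p\<bar> \<le> 1" using that ent_le_entmax[of S "fst p" "snd p"]
          by (simp add: opnorm_eq)
        then show "\<bar>S $ fst p $ snd p * c p\<bar> \<le> \<bar>c p\<bar>"
          by (simp add: abs_mult mult_left_le_one_le)
      qed
      finally show ?thesis .
    qed
    have le1: "\<bar>\<psi> S\<bar> \<le> 1" if "opnorm_1inf S \<le> 1" for S
      using dual_upper[of \<psi> _ S, OF bd that] dn by simp
    define Sg :: "real^'n^'m" where "Sg = (\<chi> a b. sgn (c (a,b)))"
    have "opnorm_1inf Sg \<le> 1"
      unfolding opnorm_eq Sg_def by (rule entmax_le) (simp only: vec_lambda_beta sgn_abs_le1)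
    moreover have "\<psi> Sg = (\<Sum>p\<in>UNIV. \<bar>c p\<bar>)"
      unfolding ex Sg_def by (rule sum.cong) (auto simp: sgn_if)
    ultimately have sc: "(\<Sum>p\<in>UNIV. \<bar>c p\<bar>) \<le> 1" using le1[of Sg] by simp
    have MT: "?M \<le> (\<Sum>p\<in>UNIV. \<bar>T $ fst p $ snd p\<bar> * \<bar>c p\<bar>)"
    proof -
      have "?M = \<psi> T" using val by simp
      also have "\<dots> \<le> \<bar>\<psi> T\<bar>" by simp
      also have "\<dots> \<le> (\<Sum>p\<in>UNIV. \<bar>T $ fst p $ snd p * c p\<bar>)" unfolding ex by (rule sum_abs)
      finally show ?thesis by (simp add: abs_mult)
    qed
    have cz: "c q = 0" if "q \<noteq> (i0,j0)" for q
    proof (rule ccontr)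
      assume cq: "c q \<noteq> 0"
      have lt: "\<bar>T $ fst q $ snd q\<bar> < ?M" using uniq[of "fst q" "snd q"] that by simp
      have "(?M - \<bar>T $ fst q $ snd q\<bar>) * \<bar>c q\<bar>
          \<le> (\<Sum>p\<in>UNIV. (?M - \<bar>T $ fst p $ snd p\<bar>) * \<bar>c p\<bar>)"
      proof (rule member_le_sum[of q UNIV "\<lambda>p. (?M - \<bar>T $ fst p $ snd p\<bar>) * \<bar>c p\<bar>"])
        fix p assume "p \<in> UNIV - {q}"
        show "0 \<le> (?M - \<bar>T $ fst p $ snd p\<bar>) * \<bar>c p\<bar>"
          using ent_le_entmax[of T "fst p" "snd p"] by (simp add: opnorm_eq)
      qed auto
      also have "\<dots> = ?M * (\<Sum>p\<in>UNIV. \<bar>c p\<bar>) - (\<Sum>p\<in>UNIV. \<bar>T $ fst p $ snd p\<bar> * \<bar>c p\<bar>)"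
        by (simp add: algebra_simps sum_subtractf sum_distrib_left)
      also have "\<dots> \<le> ?M - ?M"
      proof -
        have "?M * (\<Sum>p\<in>UNIV. \<bar>c p\<bar>) \<le> ?M * 1"
          using sc Mpos by (intro mult_left_mono) auto
        then show ?thesis using MT by linarith
      qed
      finally have "(?M - \<bar>T $ fst q $ snd q\<bar>) * \<bar>c q\<bar> \<le> 0" by simp
      moreover have "(?M - \<bar>T $ fst q $ snd q\<bar>) * \<bar>c q\<bar> > 0" using lt cq by simp
      ultimately show False by simp
    qed
    have ex2: "\<psi> S = S $ i0 $ j0 * c (i0,j0)" for S
    proof -
      have "\<psi> S = (\<Sum>p\<in>UNIV. if p = (i0,j0) then S $ fst p $ snd p * c p else 0)"
        unfolding ex by (rule sum.cong) (auto simp: cz)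
      also have "\<dots> = S $ i0 $ j0 * c (i0,j0)" by (subst sum.delta) auto
      finally show ?thesis .
    qed
    have c0le: "\<bar>c (i0,j0)\<bar> \<le> 1"
      using member_le_sum[of "(i0,j0)" UNIV "\<lambda>p. \<bar>c p\<bar>"] sc by auto
    have "T $ i0 $ j0 * c (i0,j0) = \<bar>T $ i0 $ j0\<bar>" using ex2[of T] val p0 by simp
    then have "T $ i0 $ j0 * c (i0,j0) = T $ i0 $ j0 * sgn (T $ i0 $ j0)"
      by (simp add: sgn_if)
    then have "c (i0,j0) = sgn (T $ i0 $ j0)" using T0 by simp
    then show ?thesis using ex2 by (auto simp: phiT_def)
  qed
  have "Jset T = {phiT T i0 j0}" using J0 sub by blast
  then show ?thesis by (auto simp: smooth_op_def)
qed

end
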